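(* Let $M$, $P_0,P_1,N$ be as in the context and let $V\subset M$ be an open set on which $N$ has $n$ pairwise distinct eigenvalues, each of multiplicity $2$, given by smooth functions $\lambda_1,\dots,\lambda_n$. Write the minimal polynomial of $N$ as $\Delta_N(\lambda)=\prod_{i=1}^n(\lambda-\lambda_i)=\lambda^n-c_1\lambda^{n-1}-c_2\lambda^{n-2}-\cdots-c_n$. Then for all $\lambda$, $$N^*d\Delta_N(\lambda)=\lambda\,d\Delta_N(\lambda)+\Delta_N(\lambda)\,dc_1,$$ equivalently $N^*dc_i=dc_{i+1}+c_i\,dc_1$ for $i=1,\dots,n$, with $c_{n+1}\equiv0$.
   Context: $M$ is a $2n$-dimensional manifold with compatible Poisson tensors $P_0$ (invertible) and $P_1$ (i.e. $P_0+tP_1$ is Poisson for all $t$), and $N$ is the $(1,1)$-tensor with $P_1=NP_0$; $N^*=P_0^{-1}P_1$ is its adjoint acting on $1$-forms; $d$ denotes the differential on $M$ with $\lambda$ held fixed. *)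

theory Defs
  imports "HOL-Analysis.Analysis" "HOL-Computational_Algebra.Polynomial"
begin

text \<open>Local coordinate model: a chart domain U of the 2n-manifold is an open subset of
  real^'m with CARD('m) = 2n. Tensors are given by their component matrices.\<close>

definition partial :: "(real^'m \<Rightarrow> real) \<Rightarrow> real^'m \<Rightarrow> 'm \<Rightarrow> real" where
  "partial f x l = frechet_derivative f (at x) (axis l 1)"

definition dfun :: "(real^'m \<Rightarrow> real) \<Rightarrow> real^'m \<Rightarrow> real^'m" where
  "dfun f x = (\<chi> l. partial f x l)"

coinductive smooth_on :: "(real^'m) set \<Rightarrow> (real^'m \<Rightarrow> real) \<Rightarrow> bool" where
  "\<lbrakk>\<forall>x\<in>S. f differentiable (at x); \<forall>l. smooth_on S (\<lambda>x. partial f x l)\<rbrakk>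
     \<Longrightarrow> smooth_on S f"

definition is_poisson :: "(real^'m) set \<Rightarrow> (real^'m \<Rightarrow> real^'m^'m) \<Rightarrow> bool" where
  "is_poisson U P \<longleftrightarrow>
     (\<forall>i j. smooth_on U (\<lambda>x. P x $ i $ j)) \<and>
     (\<forall>x\<in>U. transpose (P x) = - P x) \<and>
     (\<forall>x\<in>U. \<forall>i j k. (\<Sum>l\<in>UNIV.
          P x $ i $ l * partial (\<lambda>y. P y $ j $ k) x l
        + P x $ j $ l * partial (\<lambda>y. P y $ k $ i) x l
        + P x $ k $ l * partial (\<lambda>y. P y $ i $ j) x l) = 0)"

definition compatible_poisson :: "(real^'m) set \<Rightarrow> (real^'m \<Rightarrow> real^'m^'m) \<Rightarrow> (real^'m \<Rightarrow> real^'m^'m) \<Rightarrow> bool" where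
  "compatible_poisson U P0 P1 \<longleftrightarrow> (\<forall>t::real. is_poisson U (\<lambda>x. P0 x + t *\<^sub>R P1 x))"

text \<open>N with P1 = N P0, and its adjoint N* = P0^{-1} P1 acting on covectors.\<close>
definition recursion_op :: "(real^'m \<Rightarrow> real^'m^'m) \<Rightarrow> (real^'m \<Rightarrow> real^'m^'m) \<Rightarrow> real^'m \<Rightarrow> real^'m^'m" where
  "recursion_op P0 P1 x = P1 x ** matrix_inv (P0 x)"

definition recursion_adj :: "(real^'m \<Rightarrow> real^'m^'m) \<Rightarrow> (real^'m \<Rightarrow> real^'m^'m) \<Rightarrow> real^'m \<Rightarrow> real^'m^'m" where
  "recursion_adj P0 P1 x = matrix_inv (P0 x) ** P1 x"

text \<open>Minimal polynomial Delta_N = prod (t - lambda_i) and its coefficients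
  Delta_N(t) = t^n - c_1 t^(n-1) - ... - c_n; c_k = 0 outside 1..n (so c_(n+1) = 0).\<close>
definition min_poly :: "nat \<Rightarrow> (nat \<Rightarrow> real^'m \<Rightarrow> real) \<Rightarrow> real^'m \<Rightarrow> real poly" where
  "min_poly n lam x = (\<Prod>i<n. [:- lam i x, 1:])"

definition cf :: "nat \<Rightarrow> (nat \<Rightarrow> real^'m \<Rightarrow> real) \<Rightarrow> nat \<Rightarrow> real^'m \<Rightarrow> real" where
  "cf n lam k x = (if 1 \<le> k \<and> k \<le> n then - coeff (min_poly n lam x) (n - k) else 0)"

end

theory Submission
  imports Defs
begin


definition low :: "real^'m^'m \<Rightarrow> ('m \<Rightarrow> 'm \<Rightarrow> 'm \<Rightarrow> real) \<Rightarrow> 'm \<Rightarrow> 'm \<Rightarrow> 'm \<Rightarrow> real" where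
  "low W S a b c = (\<Sum>i\<in>UNIV. \<Sum>j\<in>UNIV. \<Sum>k\<in>UNIV. W$a$i * W$b$j * W$c$k * S i j k)"

lemma low_add: "low W (\<lambda>i j k. S i j k + R i j k) a b c = low W S a b c + low W R a b c"
  by (simp add: low_def distrib_left sum.distrib)

lemma low_rot: "low W (\<lambda>i j k. S j k i) a b c = low W S b c a"
proof -
  have "low W (\<lambda>i j k. S j k i) a b c = (\<Sum>i\<in>UNIV. \<Sum>j\<in>UNIV. \<Sum>k\<in>UNIV. W$b$j * W$c$k * W$a$i * S j k i)"
    unfolding low_def by (simp add: mult_ac)
  also have "\<dots> = (\<Sum>j\<in>UNIV. \<Sum>i\<in>UNIV. \<Sum>k\<in>UNIV. W$b$j * W$c$k * W$a$i * S j k i)"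
    by (rule sum.swap)
  also have "\<dots> = (\<Sum>j\<in>UNIV. \<Sum>k\<in>UNIV. \<Sum>i\<in>UNIV. W$b$j * W$c$k * W$a$i * S j k i)"
    by (rule sum.cong[OF refl], rule sum.swap)
  finally show ?thesis unfolding low_def .
qed

lemma low_cyc:
  assumes "\<And>i j k. S i j k + S j k i + S k i j = 0"
  shows "low W S a b c + low W S b c a + low W S c a b = 0"
proof -
  have "low W (\<lambda>i j k. S i j k + S j k i + S k i j) a b c = 0"
    using assms by (simp add: low_def)
  moreover have "low W (\<lambda>i j k. S i j k + S j k i + S k i j) a b c
     = low W S a b c + low W S b c a + low W S c a b"
    using low_add[of W "\<lambda>i j k. S i j k + S j k i" "\<lambda>i j k. S k i j"]
      low_add[of W S "\<lambda>i j k. S j k i"] low_rot[of W S] low_rot[of W "\<lambda>i j k. S j k i"]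
    by simp
  ultimately show ?thesis by simp
qed

lemma sum_swap4: "(\<Sum>a\<in>A. \<Sum>b\<in>B. \<Sum>c\<in>C. \<Sum>d\<in>D. f a b c d) = (\<Sum>d\<in>D. \<Sum>a\<in>A. \<Sum>b\<in>B. \<Sum>c\<in>C. f a b c d)"
proof -
  have "(\<Sum>a\<in>A. \<Sum>b\<in>B. \<Sum>c\<in>C. \<Sum>d\<in>D. f a b c d) = (\<Sum>a\<in>A. \<Sum>b\<in>B. \<Sum>d\<in>D. \<Sum>c\<in>C. f a b c d)"
    by (rule sum.cong[OF refl], rule sum.cong[OF refl], rule sum.swap)
  also have "\<dots> = (\<Sum>a\<in>A. \<Sum>d\<in>D. \<Sum>b\<in>B. \<Sum>c\<in>C. f a b c d)"
    by (rule sum.cong[OF refl], rule sum.swap)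
  also have "\<dots> = (\<Sum>d\<in>D. \<Sum>a\<in>A. \<Sum>b\<in>B. \<Sum>c\<in>C. f a b c d)"
    by (rule sum.swap)
  finally show ?thesis .
qed

lemma sum_swap3: "(\<Sum>a\<in>A. \<Sum>b\<in>B. \<Sum>c\<in>C. f a b c) = (\<Sum>c\<in>C. \<Sum>a\<in>A. \<Sum>b\<in>B. f a b c)"
proof -
  have "(\<Sum>a\<in>A. \<Sum>b\<in>B. \<Sum>c\<in>C. f a b c) = (\<Sum>a\<in>A. \<Sum>c\<in>C. \<Sum>b\<in>B. f a b c)"
    by (rule sum.cong[OF refl], rule sum.swap)
  also have "\<dots> = (\<Sum>c\<in>C. \<Sum>a\<in>A. \<Sum>b\<in>B. f a b c)"
    by (rule sum.swap)
  finally show ?thesis .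
qed

lemma low_S:
  "low W (\<lambda>i j k. \<Sum>l\<in>UNIV. P$i$l * Q l $j$k) a b c
   = (\<Sum>l\<in>UNIV. (W**P)$a$l * (W ** Q l ** transpose W)$b$c)"
proof -
  have "low W (\<lambda>i j k. \<Sum>l\<in>UNIV. P$i$l * Q l $j$k) a b c
     = (\<Sum>i\<in>UNIV. \<Sum>j\<in>UNIV. \<Sum>k\<in>UNIV. \<Sum>l\<in>UNIV. W$a$i * P$i$l * (W$b$j * Q l$j$k * W$c$k))"
    unfolding low_def by (simp add: sum_distrib_left mult_ac)
  also have "\<dots> = (\<Sum>l\<in>UNIV. \<Sum>i\<in>UNIV. \<Sum>j\<in>UNIV. \<Sum>k\<in>UNIV. W$a$i * P$i$l * (W$b$j * Q l$j$k * W$c$k))"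
    by (rule sum_swap4)
  also have "\<dots> = (\<Sum>l\<in>UNIV. (W**P)$a$l * (W ** Q l ** transpose W)$b$c)"
    apply (simp add: matrix_matrix_mult_def transpose_def sum_distrib_left sum_distrib_right mult_ac)
    apply (rule sum.cong[OF refl])
    apply (subst sum_swap3) apply (rule sum.cong[OF refl])
    apply (subst sum.swap) by simp
  finally show ?thesis .
qed



lemma mat1_sum: "(\<Sum>l\<in>UNIV. (mat 1 :: real^'m^'m)$a$l * f l) = f a"
proof -
  have "(\<Sum>l\<in>UNIV. (mat 1 :: real^'m^'m)$a$l * f l) = (\<Sum>l\<in>UNIV. if a = l then f l else 0)"
    by (rule sum.cong) (auto simp: mat_def)
  thus ?thesis by simp
qed

lemma skew_entry: assumes "transpose X = - (X::real^'m^'m)" shows "X$a$b = - X$b$a"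
proof -
  have "(transpose X)$b$a = (- X)$b$a" using assms by simp
  thus ?thesis by (simp add: transpose_def)
qed

lemma transpose_diff: "transpose (X - Y) = transpose X - transpose (Y::real^'m^'m)"
  by (simp add: transpose_def vec_eq_iff)
lemma transpose_plus: "transpose (X + Y) = transpose X + transpose (Y::real^'m^'m)"
  by (simp add: transpose_def vec_eq_iff)

lemma mm_diff_l: "(X::real^'m^'m) ** (Y - Z) = X ** Y - X ** Z"
  by (simp add: matrix_matrix_mult_def vec_eq_iff sum_subtractf right_diff_distrib)

lemma transpose_neg: "transpose (- X) = - transpose (X::real^'m^'m)"
  by (simp add: transpose_def vec_eq_iff)
lemma mm_rneg: "(X::real^'m^'m) ** (- Y) = - (X ** Y)"
  by (simp add: matrix_matrix_mult_def vec_eq_iff sum_negf)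
lemma mm_lneg: "(- X::real^'m^'m) ** Y = - (X ** Y)"
  by (simp add: matrix_matrix_mult_def vec_eq_iff sum_negf)

locale pn =
  fixes A B W :: "real^'m^'m" and Ad Bd :: "'m \<Rightarrow> real^'m^'m"
  assumes WA: "W ** A = mat 1" and AW: "A ** W = mat 1"
    and skA: "transpose A = - A" and skB: "transpose B = - B"
    and skAd: "\<And>l. transpose (Ad l) = - Ad l" and skBd: "\<And>l. transpose (Bd l) = - Bd l"
    and J0: "\<And>i j k. (\<Sum>l\<in>UNIV. A$i$l * Ad l$j$k + A$j$l * Ad l$k$i + A$k$l * Ad l$i$j) = 0"
    and J1: "\<And>i j k. (\<Sum>l\<in>UNIV. (A$i$l * Bd l$j$k + B$i$l * Ad l$j$k) + (A$j$l * Bd l$k$i + B$j$l * Ad l$k$i)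
                     + (A$k$l * Bd l$i$j + B$k$l * Ad l$i$j)) = 0"
    and J2: "\<And>i j k. (\<Sum>l\<in>UNIV. B$i$l * Bd l$j$k + B$j$l * Bd l$k$i + B$k$l * Bd l$i$j) = 0"
begin

lemma skW: "transpose W = - W"
proof -
  have "transpose W ** transpose A = mat 1"
    by (metis AW matrix_transpose_mul transpose_mat)
  hence "(- transpose W) ** A = mat 1" using skA by (simp add: mm_rneg mm_lneg)
  hence "(- transpose W) ** (A ** W) = W" by (metis matrix_mul_assoc matrix_mul_lid)
  hence "- transpose W = W" using AW by simp
  hence "- (- transpose W) = - W" by simp
  thus ?thesis by simp
qed

definition "Wd l = - (W ** Ad l ** W)"
definition "N = B ** W"
definition "Nt = W ** B"
definition "bd l = Wd l ** B ** W + W ** Bd l ** W + W ** B ** Wd l"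
definition "Nd l = Bd l ** W + B ** Wd l"

lemma Nt_tr: "Nt = transpose N"
  unfolding N_def Nt_def by (simp add: matrix_transpose_mul skW skB mm_rneg mm_lneg)

lemma F0: "Wd a$b$c + Wd b$c$a + Wd c$a$b = 0"
proof -
  let ?S = "\<lambda>i j k. \<Sum>l\<in>UNIV. A$i$l * Ad l $j$k"
  have "low W ?S a b c + low W ?S b c a + low W ?S c a b = 0"
  proof (rule low_cyc)
    fix i j k
    show "?S i j k + ?S j k i + ?S k i j = 0"
      using J0[of i j k] by (simp only: sum.distrib)
  qed
  moreover have "low W ?S a b c = Wd a $b$c" for a b c
    unfolding low_S WA mat1_sum Wd_def skW mm_rneg by simp
  ultimately show ?thesis by (simp only:)
qed

lemma bd_alt: "bd a = Wd a ** N + W ** Bd a ** W + Nt ** Wd a"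
  unfolding bd_def N_def Nt_def by (simp add: matrix_mul_assoc)

lemma Ntc: "N$d$c = Nt$c$d"
  by (simp add: Nt_tr transpose_def)

lemma G_cyc:
  "((Wd a ** N)$b$c + (Nt**Wd a)$b$c + (\<Sum>l\<in>UNIV. Nt$a$l * Wd l$b$c))
 + ((Wd b ** N)$c$a + (Nt**Wd b)$c$a + (\<Sum>l\<in>UNIV. Nt$b$l * Wd l$c$a))
 + ((Wd c ** N)$a$b + (Nt**Wd c)$a$b + (\<Sum>l\<in>UNIV. Nt$c$l * Wd l$a$b)) = 0"
proof -
  have "((Wd a ** N)$b$c + (Nt**Wd a)$b$c + (\<Sum>l\<in>UNIV. Nt$a$l * Wd l$b$c))
 + ((Wd b ** N)$c$a + (Nt**Wd b)$c$a + (\<Sum>l\<in>UNIV. Nt$b$l * Wd l$c$a))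
 + ((Wd c ** N)$a$b + (Nt**Wd c)$a$b + (\<Sum>l\<in>UNIV. Nt$c$l * Wd l$a$b))
   = (\<Sum>d\<in>UNIV. Nt$a$d * (Wd d$b$c + Wd b$c$d + Wd c$d$b) + Nt$b$d * (Wd a$d$c + Wd d$c$a + Wd c$a$d)
        + Nt$c$d * (Wd a$b$d + Wd b$d$a + Wd d$a$b))"
    by (simp add: matrix_matrix_mult_def Ntc sum.distrib distrib_left algebra_simps)
  also have "\<dots> = 0" by (simp add: F0)
  finally show ?thesis .
qed

lemma F1: "bd a$b$c + bd b$c$a + bd c$a$b = 0"
proof -
  let ?SA = "\<lambda>i j k. \<Sum>l\<in>UNIV. A$i$l * Bd l $j$k"
  let ?SB = "\<lambda>i j k. \<Sum>l\<in>UNIV. B$i$l * Ad l $j$k"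
  let ?S = "\<lambda>i j k. ?SA i j k + ?SB i j k"
  have "low W ?S a b c + low W ?S b c a + low W ?S c a b = 0"
  proof (rule low_cyc)
    fix i j k
    show "?S i j k + ?S j k i + ?S k i j = 0"
      using J1[of i j k] by (simp only: sum.distrib)
  qed
  moreover have "low W ?S a b c = - bd a$b$c + ((Wd a ** N)$b$c + (Nt**Wd a)$b$c + (\<Sum>l\<in>UNIV. Nt$a$l * Wd l$b$c))" for a b c
  proof -
    have "low W ?S a b c = low W ?SA a b c + low W ?SB a b c" by (rule low_add)
    also have "low W ?SA a b c = - (W ** Bd a ** W)$b$c"
      unfolding low_S WA mat1_sum skW mm_rneg by simp
    also have "low W ?SB a b c = (\<Sum>l\<in>UNIV. Nt$a$l * Wd l$b$c)"
      unfolding low_S skW mm_rneg Wd_def Nt_def by simp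
    finally show ?thesis unfolding bd_alt by simp
  qed
  ultimately have "- bd a$b$c - bd b$c$a - bd c$a$b + 0 = 0"
    using G_cyc[of a b c] by (simp only: )
  thus ?thesis by simp
qed

lemma WNd: "W ** Nd l = bd l - Wd l ** N"
  unfolding bd_alt Nd_def N_def Nt_def
  by (simp add: matrix_add_ldistrib matrix_mul_assoc)

lemma WN: "W ** N = Nt ** W"
  unfolding N_def Nt_def by (simp add: matrix_mul_assoc)

lemma WdW: "W ** Bd l ** W = bd l - Wd l ** N - Nt ** Wd l"
  unfolding bd_alt by simp

definition "H a b c = (\<Sum>l\<in>UNIV. Nt$a$l * (bd l$b$c - (Wd l ** N)$b$c - (Nt ** Wd l)$b$c))"

lemma F2: "H a b c + H b c a + H c a b = 0"
proof -
  let ?S = "\<lambda>i j k. \<Sum>l\<in>UNIV. B$i$l * Bd l $j$k"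
  have "low W ?S a b c + low W ?S b c a + low W ?S c a b = 0"
  proof (rule low_cyc)
    fix i j k
    show "?S i j k + ?S j k i + ?S k i j = 0"
      using J2[of i j k] by (simp only: sum.distrib)
  qed
  moreover have "low W ?S a b c = - H a b c" for a b c
  proof -
    have "low W ?S a b c = (\<Sum>l\<in>UNIV. Nt$a$l * - (W ** Bd l ** W)$b$c)"
      unfolding low_S skW mm_rneg Nt_def by simp
    also have "\<dots> = - H a b c"
      unfolding WdW H_def by (simp add: sum_negf[symmetric] algebra_simps)
    finally show ?thesis .
  qed
  ultimately show ?thesis by simp
qed

lemma Wd_sk: "Wd l$a$b = - Wd l$b$a"
proof -
  have "transpose (Wd l) = - Wd l"
    unfolding Wd_def by (simp add: transpose_neg matrix_transpose_mul skW skAd mm_rneg mm_lneg matrix_mul_assoc)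
  thus ?thesis by (rule skew_entry)
qed

lemma bd_sk: "bd l$a$b = - bd l$b$a"
proof -
  have "transpose (bd l) = - bd l"
    unfolding bd_def Wd_def by (simp add: transpose_neg transpose_diff transpose_plus matrix_transpose_mul skW skAd skBd skB mm_rneg mm_lneg matrix_mul_assoc algebra_simps)
  thus ?thesis by (rule skew_entry)
qed

lemma LT_split:
  "(\<Sum>l\<in>UNIV. Nt$j$l * (W ** Nd l)$m$k) - (\<Sum>l\<in>UNIV. Nt$k$l * (W**Nd l)$m$j) - (W ** N ** Nd j)$m$k + (W**N**Nd k)$m$j
   = ((\<Sum>l\<in>UNIV. Nt$j$l * bd l$m$k) - (\<Sum>l\<in>UNIV. Nt$k$l * bd l$m$j) - (Nt**bd j)$m$k + (Nt**bd k)$m$j)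
   + (- (\<Sum>l\<in>UNIV. Nt$j$l*(Wd l**N)$m$k) + (\<Sum>l\<in>UNIV. Nt$k$l*(Wd l**N)$m$j) + (Nt**(Wd j**N))$m$k - (Nt**(Wd k**N))$m$j)"
proof -
  have e: "W ** N ** Nd x = Nt ** (bd x - Wd x ** N)" for x
    by (metis WN WNd matrix_mul_assoc)
  show ?thesis unfolding e WNd mm_diff_l
    by (simp add: sum_subtractf right_diff_distrib algebra_simps)
qed

lemma H_split:
  "H j m k + H m k j + H k j m =
    ((\<Sum>l\<in>UNIV. Nt$j$l * bd l$m$k) + (\<Sum>l\<in>UNIV. Nt$m$l * bd l$k$j) + (\<Sum>l\<in>UNIV. Nt$k$l * bd l$j$m))
  + (- (\<Sum>l\<in>UNIV. Nt$j$l*(Wd l**N)$m$k) - (\<Sum>l\<in>UNIV. Nt$j$l*(Nt**Wd l)$m$k)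
     - (\<Sum>l\<in>UNIV. Nt$m$l*(Wd l**N)$k$j) - (\<Sum>l\<in>UNIV. Nt$m$l*(Nt**Wd l)$k$j)
     - (\<Sum>l\<in>UNIV. Nt$k$l*(Wd l**N)$j$m) - (\<Sum>l\<in>UNIV. Nt$k$l*(Nt**Wd l)$j$m))"
  unfolding H_def by (simp add: sum_subtractf sum.distrib right_diff_distrib algebra_simps)

lemma beta_eq:
  "(\<Sum>l\<in>UNIV. Nt$j$l * bd l$m$k) - (\<Sum>l\<in>UNIV. Nt$k$l * bd l$m$j) - (Nt**bd j)$m$k + (Nt**bd k)$m$j
  = (\<Sum>l\<in>UNIV. Nt$j$l * bd l$m$k) + (\<Sum>l\<in>UNIV. Nt$m$l * bd l$k$j) + (\<Sum>l\<in>UNIV. Nt$k$l * bd l$j$m)"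
proof -
  have 1: "(\<Sum>l\<in>UNIV. Nt$k$l * bd l$j$m) = - (\<Sum>l\<in>UNIV. Nt$k$l * bd l$m$j)"
    by (subst bd_sk) (simp add: sum_negf)
  have 2: "(\<Sum>l\<in>UNIV. Nt$m$l * bd l$k$j) = (Nt**bd k)$m$j - (Nt**bd j)$m$k"
  proof -
    have "bd l$k$j = bd k$l$j - bd j$l$k" for l
      using F1[of l k j] bd_sk[of k j l] by simp
    thus ?thesis by (simp add: matrix_matrix_mult_def right_diff_distrib sum_subtractf)
  qed
  show ?thesis unfolding 1 2 by simp
qed

lemma c1: "(\<Sum>l\<in>UNIV. Nt$j$l * (Wd l**N)$m$k) = (\<Sum>p\<in>UNIV. \<Sum>q\<in>UNIV. Nt$j$p * Nt$k$q * Wd p$m$q)"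
  by (simp add: matrix_matrix_mult_def Ntc sum_distrib_left mult_ac)
lemma c2: "(\<Sum>l\<in>UNIV. Nt$k$l * (Wd l**N)$m$j) = (\<Sum>p\<in>UNIV. \<Sum>q\<in>UNIV. Nt$j$p * Nt$k$q * Wd q$m$p)"
  by (simp add: matrix_matrix_mult_def Ntc sum_distrib_left mult_ac) (rule sum.swap)
lemma c3: "(Nt**(Wd j**N))$m$k = (\<Sum>p\<in>UNIV. \<Sum>q\<in>UNIV. Nt$m$p * Nt$k$q * Wd j$p$q)"
  by (simp add: matrix_matrix_mult_def Ntc sum_distrib_left mult_ac)
lemma c4: "(Nt**(Wd k**N))$m$j = (\<Sum>p\<in>UNIV. \<Sum>q\<in>UNIV. Nt$m$p * Nt$j$q * Wd k$p$q)"
  by (simp add: matrix_matrix_mult_def Ntc sum_distrib_left mult_ac)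
lemma c5: "(\<Sum>l\<in>UNIV. Nt$j$l * (Nt**Wd l)$m$k) = (\<Sum>p\<in>UNIV. \<Sum>q\<in>UNIV. Nt$m$p * Nt$j$q * Wd q$p$k)"
  by (simp add: matrix_matrix_mult_def Ntc sum_distrib_left mult_ac) (rule sum.swap)
lemma c6: "(\<Sum>l\<in>UNIV. Nt$m$l * (Wd l**N)$k$j) = (\<Sum>p\<in>UNIV. \<Sum>q\<in>UNIV. Nt$m$p * Nt$j$q * Wd p$k$q)"
  by (simp add: matrix_matrix_mult_def Ntc sum_distrib_left mult_ac)
lemma c7: "(\<Sum>l\<in>UNIV. Nt$m$l * (Nt**Wd l)$k$j) = (\<Sum>p\<in>UNIV. \<Sum>q\<in>UNIV. Nt$m$p * Nt$k$q * Wd p$q$j)"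
  by (simp add: matrix_matrix_mult_def Ntc sum_distrib_left mult_ac)
lemma c8: "(\<Sum>l\<in>UNIV. Nt$k$l * (Wd l**N)$j$m) = (\<Sum>p\<in>UNIV. \<Sum>q\<in>UNIV. Nt$m$p * Nt$k$q * Wd q$j$p)"
  by (simp add: matrix_matrix_mult_def Ntc sum_distrib_left mult_ac) (rule sum.swap)
lemma c9: "(\<Sum>l\<in>UNIV. Nt$k$l * (Nt**Wd l)$j$m) = (\<Sum>p\<in>UNIV. \<Sum>q\<in>UNIV. Nt$j$p * Nt$k$q * Wd q$p$m)"
  by (simp add: matrix_matrix_mult_def Ntc sum_distrib_left mult_ac) (rule sum.swap)

lemma W_eq:
  "- (\<Sum>l\<in>UNIV. Nt$j$l*(Wd l**N)$m$k) + (\<Sum>l\<in>UNIV. Nt$k$l*(Wd l**N)$m$j) + (Nt**(Wd j**N))$m$k - (Nt**(Wd k**N))$m$j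
  = - (\<Sum>l\<in>UNIV. Nt$j$l*(Wd l**N)$m$k) - (\<Sum>l\<in>UNIV. Nt$j$l*(Nt**Wd l)$m$k)
     - (\<Sum>l\<in>UNIV. Nt$m$l*(Wd l**N)$k$j) - (\<Sum>l\<in>UNIV. Nt$m$l*(Nt**Wd l)$k$j)
     - (\<Sum>l\<in>UNIV. Nt$k$l*(Wd l**N)$j$m) - (\<Sum>l\<in>UNIV. Nt$k$l*(Nt**Wd l)$j$m)"
proof -
  have g1: "(\<Sum>p\<in>UNIV. \<Sum>q\<in>UNIV. Nt$j$p * Nt$k$q * Wd q$m$p) + (\<Sum>p\<in>UNIV. \<Sum>q\<in>UNIV. Nt$j$p * Nt$k$q * Wd q$p$m) = 0"
  proof -
    have "(\<Sum>p\<in>UNIV. \<Sum>q\<in>UNIV. Nt$j$p * Nt$k$q * Wd q$p$m) = - (\<Sum>p\<in>UNIV. \<Sum>q\<in>UNIV. Nt$j$p * Nt$k$q * Wd q$m$p)"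
      by (subst Wd_sk) (simp add: sum_negf)
    thus ?thesis by simp
  qed
  have g2: "(\<Sum>p\<in>UNIV. \<Sum>q\<in>UNIV. Nt$m$p * Nt$k$q * Wd j$p$q) + (\<Sum>p\<in>UNIV. \<Sum>q\<in>UNIV. Nt$m$p * Nt$k$q * Wd p$q$j)
     + (\<Sum>p\<in>UNIV. \<Sum>q\<in>UNIV. Nt$m$p * Nt$k$q * Wd q$j$p) = 0"
  proof -
    have "(\<Sum>p\<in>UNIV. \<Sum>q\<in>UNIV. Nt$m$p * Nt$k$q * Wd j$p$q) + (\<Sum>p\<in>UNIV. \<Sum>q\<in>UNIV. Nt$m$p * Nt$k$q * Wd p$q$j)
     + (\<Sum>p\<in>UNIV. \<Sum>q\<in>UNIV. Nt$m$p * Nt$k$q * Wd q$j$p)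
      = (\<Sum>p\<in>UNIV. \<Sum>q\<in>UNIV. Nt$m$p * Nt$k$q * (Wd j$p$q + Wd p$q$j + Wd q$j$p))"
      by (simp add: sum.distrib distrib_left)
    also have "\<dots> = 0" by (simp add: F0)
    finally show ?thesis .
  qed
  have g3: "- (\<Sum>p\<in>UNIV. \<Sum>q\<in>UNIV. Nt$m$p * Nt$j$q * Wd k$p$q) + (\<Sum>p\<in>UNIV. \<Sum>q\<in>UNIV. Nt$m$p * Nt$j$q * Wd q$p$k)
     + (\<Sum>p\<in>UNIV. \<Sum>q\<in>UNIV. Nt$m$p * Nt$j$q * Wd p$k$q) = 0"
  proof -
    have "- (\<Sum>p\<in>UNIV. \<Sum>q\<in>UNIV. Nt$m$p * Nt$j$q * Wd k$p$q) + (\<Sum>p\<in>UNIV. \<Sum>q\<in>UNIV. Nt$m$p * Nt$j$q * Wd q$p$k)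
     + (\<Sum>p\<in>UNIV. \<Sum>q\<in>UNIV. Nt$m$p * Nt$j$q * Wd p$k$q)
      = (\<Sum>p\<in>UNIV. \<Sum>q\<in>UNIV. Nt$m$p * Nt$j$q * (- Wd k$p$q + Wd q$p$k + Wd p$k$q))"
      by (simp add: sum.distrib distrib_left sum_negf right_diff_distrib sum_subtractf)
    also have "\<dots> = 0"
    proof -
      have "- Wd k$p$q + Wd q$p$k + Wd p$k$q = 0" for p q
        using F0[of p k q] Wd_sk[of k q p] by simp
      thus ?thesis by simp
    qed
    finally show ?thesis .
  qed
  show ?thesis unfolding c1[where j=j and m=m and k=k] c2[where j=j and m=m and k=k] c3[where j=j and m=m and k=k] c4[where j=j and m=m and k=k] c5[where j=j and m=m and k=k] c6[where j=j and m=m and k=k] c7[where j=j and m=m and k=k] c8[where j=j and m=m and k=k] c9[where j=j and m=m and k=k] using g1 g2 g3 by simp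
qed

lemma LT0: "(\<Sum>l\<in>UNIV. Nt$j$l * (W ** Nd l)$m$k) - (\<Sum>l\<in>UNIV. Nt$k$l * (W**Nd l)$m$j) - (W ** N ** Nd j)$m$k + (W**N**Nd k)$m$j = 0"
  unfolding LT_split beta_eq W_eq H_split[symmetric] using F2[of j m k] by simp

definition "T i j k = (\<Sum>l\<in>UNIV. N$l$j * Nd l$i$k - N$l$k * Nd l$i$j - N$i$l * (Nd j$l$k - Nd k$l$j))"

lemma lowT: "(\<Sum>i\<in>UNIV. W$m$i * T i j k) =
  (\<Sum>l\<in>UNIV. Nt$j$l * (W ** Nd l)$m$k) - (\<Sum>l\<in>UNIV. Nt$k$l * (W**Nd l)$m$j) - (W ** N ** Nd j)$m$k + (W**N**Nd k)$m$j"
proof -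
  have a: "(\<Sum>i\<in>UNIV. W$m$i * (\<Sum>l\<in>UNIV. N$l$j * Nd l$i$k)) = (\<Sum>l\<in>UNIV. Nt$j$l * (W ** Nd l)$m$k)" for j k
    by (simp add: matrix_matrix_mult_def Ntc sum_distrib_left mult_ac) (rule sum.swap)
  have b: "(\<Sum>i\<in>UNIV. W$m$i * (\<Sum>l\<in>UNIV. N$i$l * Nd j$l$k)) = (W ** N ** Nd j)$m$k" for j k
    by (simp add: matrix_matrix_mult_def sum_distrib_left sum_distrib_right mult_ac) (rule sum.swap)
  have "(\<Sum>i\<in>UNIV. W$m$i * T i j k) = (\<Sum>i\<in>UNIV. W$m$i * (\<Sum>l\<in>UNIV. N$l$j * Nd l$i$k))
     - (\<Sum>i\<in>UNIV. W$m$i * (\<Sum>l\<in>UNIV. N$l$k * Nd l$i$j)) - (\<Sum>i\<in>UNIV. W$m$i * (\<Sum>l\<in>UNIV. N$i$l * Nd j$l$k))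
     + (\<Sum>i\<in>UNIV. W$m$i * (\<Sum>l\<in>UNIV. N$i$l * Nd k$l$j))"
    unfolding T_def by (simp add: sum_subtractf sum.distrib right_diff_distrib distrib_left sum_distrib_left)
  also have "\<dots> = (\<Sum>l\<in>UNIV. Nt$j$l * (W ** Nd l)$m$k) - (\<Sum>l\<in>UNIV. Nt$k$l * (W**Nd l)$m$j) - (W ** N ** Nd j)$m$k + (W**N**Nd k)$m$j"
    unfolding a b ..
  finally show ?thesis .
qed

lemma T0: "T i j k = 0"
proof -
  have "T i j k = (\<Sum>m\<in>UNIV. A$i$m * (\<Sum>i'\<in>UNIV. W$m$i' * T i' j k))"
  proof -
    have "(\<Sum>m\<in>UNIV. A$i$m * (\<Sum>i'\<in>UNIV. W$m$i' * T i' j k)) = (\<Sum>i'\<in>UNIV. (A**W)$i$i' * T i' j k)"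
      by (simp add: matrix_matrix_mult_def sum_distrib_left sum_distrib_right mult_ac) (rule sum.swap)
    thus ?thesis by (simp add: AW mat1_sum)
  qed
  also have "\<dots> = 0" unfolding lowT LT0 by simp
  finally show ?thesis .
qed

lemma contraction:
  assumes KN: "K ** N = N ** K"
  shows "(\<Sum>l\<in>UNIV. N$l$j * trace (K ** Nd l)) = trace (K ** N ** Nd j)"
proof -
  have z: "(\<Sum>i\<in>UNIV. \<Sum>k\<in>UNIV. T i j k * K$k$i) = 0" by (simp add: T0)
  have e: "(\<Sum>i\<in>UNIV. \<Sum>k\<in>UNIV. T i j k * K$k$i) =
      (\<Sum>i\<in>UNIV. \<Sum>k\<in>UNIV. \<Sum>l\<in>UNIV. N$l$j * Nd l$i$k * K$k$i)
    - (\<Sum>i\<in>UNIV. \<Sum>k\<in>UNIV. \<Sum>l\<in>UNIV. N$l$k * Nd l$i$j * K$k$i)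
    - (\<Sum>i\<in>UNIV. \<Sum>k\<in>UNIV. \<Sum>l\<in>UNIV. N$i$l * Nd j$l$k * K$k$i)
    + (\<Sum>i\<in>UNIV. \<Sum>k\<in>UNIV. \<Sum>l\<in>UNIV. N$i$l * Nd k$l$j * K$k$i)"
    unfolding T_def by (simp add: sum_distrib_right sum_distrib_left sum_subtractf sum.distrib algebra_simps)
  have t1: "(\<Sum>i\<in>UNIV. \<Sum>k\<in>UNIV. \<Sum>l\<in>UNIV. N$l$j * Nd l$i$k * K$k$i) = (\<Sum>l\<in>UNIV. N$l$j * trace (K ** Nd l))"
    unfolding trace_def matrix_matrix_mult_def
    apply (simp add: sum_distrib_left mult_ac)
    apply (subst sum_swap3) apply (rule sum.cong[OF refl]) by (rule sum.swap)
  have t2: "(\<Sum>i\<in>UNIV. \<Sum>k\<in>UNIV. \<Sum>l\<in>UNIV. N$l$k * Nd l$i$j * K$k$i) = (\<Sum>l\<in>UNIV. \<Sum>i\<in>UNIV. (N**K)$l$i * Nd l$i$j)"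
    unfolding matrix_matrix_mult_def
    apply (simp add: sum_distrib_right sum_distrib_left mult_ac)
    apply (subst sum_swap3) by (simp add: mult_ac)
  have t3: "(\<Sum>i\<in>UNIV. \<Sum>k\<in>UNIV. \<Sum>l\<in>UNIV. N$i$l * Nd j$l$k * K$k$i) = trace (K ** N ** Nd j)"
    unfolding trace_def matrix_matrix_mult_def
    apply (simp add: sum_distrib_right sum_distrib_left mult_ac)
    apply (rule sym) apply (subst sum_swap3) by (simp add: mult_ac)
  have t4: "(\<Sum>i\<in>UNIV. \<Sum>k\<in>UNIV. \<Sum>l\<in>UNIV. N$i$l * Nd k$l$j * K$k$i) = (\<Sum>k\<in>UNIV. \<Sum>l\<in>UNIV. (K**N)$k$l * Nd k$l$j)"
    unfolding matrix_matrix_mult_def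
    apply (simp add: sum_distrib_right sum_distrib_left mult_ac)
    apply (rule sym) apply (subst sum_swap3) by (simp add: mult_ac)
  show ?thesis using z unfolding e t1 t2 t3 t4 KN by simp
qed

end



lemma partial_at: "(f has_derivative f') (at x) \<Longrightarrow> partial f x l = f' (axis l 1)"
  unfolding partial_def by (simp add: frechet_derivative_at[symmetric])

lemma smooth_diff: "smooth_on S f \<Longrightarrow> x \<in> S \<Longrightarrow> f differentiable (at x)"
  by (erule smooth_on.cases) auto

lemma diff_hasD: "f differentiable (at x) \<Longrightarrow> (f has_derivative frechet_derivative f (at x)) (at x)"
  by (simp add: frechet_derivative_works)

lemma partial_cong_open:
  assumes "open S" "x \<in> S" "\<And>y. y \<in> S \<Longrightarrow> f y = g y"
  shows "partial f x l = partial g x l"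
proof -
  have "(f has_derivative D) (at x) \<longleftrightarrow> (g has_derivative D) (at x)" for D
    using has_derivative_transform_within_open[of f D x UNIV S g] has_derivative_transform_within_open[of g D x UNIV S f] assms
    by auto
  hence "frechet_derivative f (at x) = frechet_derivative g (at x)"
    unfolding frechet_derivative_def by simp
  thus ?thesis unfolding partial_def by simp
qed

lemma det_row_comb:
  fixes M :: "real^'n^'n"
  shows "det (\<chi> r. if r = i then (\<Sum>k\<in>UNIV. c k *s M$k) else M$r) = c i * det M"
proof -
  have "det (\<chi> r. if r = i then (\<Sum>k\<in>UNIV. c k *s M$k) else M$r)
      = (\<Sum>k\<in>UNIV. det (\<chi> r. if r = i then c k *s M$k else M$r))"
    by (rule det_linear_row_sum) simp
  also have "\<dots> = (\<Sum>k\<in>UNIV. c k * det (\<chi> r. if r = i then M$k else M$r))"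
    by (simp add: det_row_mul)
  also have "\<dots> = (\<Sum>k\<in>UNIV. if k = i then c k * det M else 0)"
  proof (rule sum.cong[OF refl])
    fix k
    show "c k * det (\<chi> r. if r = i then M$k else M$r) = (if k = i then c k * det M else 0)"
    proof (cases "k = i")
      case True
      have "(\<chi> r. if r = i then M$k else M$r) = M" using True by (simp add: vec_eq_iff)
      thus ?thesis using True by simp
    next
      case False
      have "det (\<chi> r. if r = i then M$k else M$r) = 0"
        by (rule det_identical_rows[of i k]) (use False in \<open>auto simp: row_def vec_eq_iff\<close>)
      thus ?thesis using False by simp
    qed
  qed
  also have "\<dots> = c i * det M" by simp
  finally show ?thesis .
qed

lemma det_has_derivative:
  fixes M :: "'a::real_normed_vector \<Rightarrow> real^'n^'n"
  assumes d: "\<And>i j. ((\<lambda>y. M y $ i $ j) has_derivative M' i j) (at x)"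
  shows "((\<lambda>y. det (M y)) has_derivative
     (\<lambda>h. \<Sum>i\<in>UNIV. det (\<chi> r. if r = i then (\<chi> c. M' i c h) else M x $ r))) (at x)"
proof -
  let ?P = "{p. p permutes (UNIV::'n set)}"
  have "((\<lambda>y. \<Sum>p\<in>?P. of_int (sign p) * (\<Prod>i\<in>UNIV. M y $ i $ p i)) has_derivative
     (\<lambda>h. \<Sum>p\<in>?P. of_int (sign p) * (\<Sum>i\<in>UNIV. M' i (p i) h * (\<Prod>j\<in>UNIV - {i}. M x $ j $ p j)))) (at x)"
    by (intro has_derivative_sum has_derivative_mult_right has_derivative_prod d)
  moreover have "(\<lambda>h. \<Sum>p\<in>?P. of_int (sign p) * (\<Sum>i\<in>UNIV. M' i (p i) h * (\<Prod>j\<in>UNIV - {i}. M x $ j $ p j)))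
     = (\<lambda>h. \<Sum>i\<in>UNIV. det (\<chi> r. if r = i then (\<chi> c. M' i c h) else M x $ r))"
  proof
    fix h
    have "det (\<chi> r. if r = i then (\<chi> c. M' i c h) else M x $ r)
        = (\<Sum>p\<in>?P. of_int (sign p) * (M' i (p i) h * (\<Prod>j\<in>UNIV - {i}. M x $ j $ p j)))" for i
      unfolding det_def
    proof (rule sum.cong[OF refl])
      fix p
      have "(\<Prod>r\<in>UNIV. (\<chi> r. if r = i then (\<chi> c. M' i c h) else M x $ r) $ r $ p r)
          = (\<Prod>r\<in>UNIV. if r = i then M' i (p r) h else M x $ r $ p r)"
        by (rule prod.cong) auto
      also have "\<dots> = M' i (p i) h * (\<Prod>j\<in>UNIV - {i}. M x $ j $ p j)"
        by (subst prod.remove[of UNIV i]) (auto intro!: prod.cong)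
      finally show "of_int (sign p) * (\<Prod>r\<in>UNIV. (\<chi> r. if r = i then (\<chi> c. M' i c h) else M x $ r) $ r $ p r)
         = of_int (sign p) * (M' i (p i) h * (\<Prod>j\<in>UNIV - {i}. M x $ j $ p j))" by simp
    qed
    thus "(\<Sum>p\<in>?P. of_int (sign p) * (\<Sum>i\<in>UNIV. M' i (p i) h * (\<Prod>j\<in>UNIV - {i}. M x $ j $ p j)))
       = (\<Sum>i\<in>UNIV. det (\<chi> r. if r = i then (\<chi> c. M' i c h) else M x $ r))"
      by (simp add: sum_distrib_left) (rule sum.swap)
  qed
  ultimately show ?thesis unfolding det_def by simp
qed

lemma row_expand: "(Y ** M)$i = (\<Sum>k\<in>UNIV. Y$i$k *s (M::real^'n^'n)$k)"
  by (simp add: matrix_matrix_mult_def vec_eq_iff sum_component mult.commute)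

lemma jacobi:
  fixes M D X :: "real^'n^'n"
  assumes "X ** M = mat 1"
  shows "(\<Sum>i\<in>UNIV. det (\<chi> r. if r = i then D$i else M $ r)) = det M * trace (D ** X)"
proof -
  have "D = (D ** X) ** M" using assms by (simp add: matrix_mul_assoc[symmetric])
  hence "D$i = (\<Sum>k\<in>UNIV. (D**X)$i$k *s M$k)" for i by (metis row_expand)
  hence "(\<Sum>i\<in>UNIV. det (\<chi> r. if r = i then D$i else M $ r)) = (\<Sum>i\<in>UNIV. (D**X)$i$i * det M)"
    by (intro sum.cong refl) (simp only: det_row_comb)
  thus ?thesis by (simp add: trace_def sum_distrib_left mult.commute)
qed




lemma partial_add: "f differentiable (at x) \<Longrightarrow> g differentiable (at x) \<Longrightarrow>
  partial (\<lambda>y. f y + g y) x l = partial f x l + partial g x l"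
  by (subst partial_at[OF has_derivative_add[OF diff_hasD diff_hasD]]) (auto simp: partial_def)

lemma partial_diff: "f differentiable (at x) \<Longrightarrow> g differentiable (at x) \<Longrightarrow>
  partial (\<lambda>y. f y - g y) x l = partial f x l - partial g x l"
  by (subst partial_at[OF has_derivative_diff[OF diff_hasD diff_hasD]]) (auto simp: partial_def)

lemma partial_neg: "f differentiable (at x) \<Longrightarrow> partial (\<lambda>y. - f y) x l = - partial f x l"
  by (subst partial_at[OF has_derivative_minus[OF diff_hasD]]) (auto simp: partial_def)

lemma partial_cmult: "f differentiable (at x) \<Longrightarrow> partial (\<lambda>y. c * f y) x l = c * partial f x l"
  by (subst partial_at[OF has_derivative_mult_right[OF diff_hasD]]) (auto simp: partial_def)

lemma partial_const: "partial (\<lambda>y. c) x l = 0"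
  by (subst partial_at[OF has_derivative_const]) simp

lemma partial_mult: "f differentiable (at x) \<Longrightarrow> g differentiable (at x) \<Longrightarrow>
  partial (\<lambda>y. f y * g y) x l = f x * partial g x l + partial f x l * g x"
  by (subst partial_at[OF has_derivative_mult[OF diff_hasD diff_hasD]]) (auto simp: partial_def)

lemma partial_sum: "finite I \<Longrightarrow> (\<And>i. i \<in> I \<Longrightarrow> f i differentiable (at x)) \<Longrightarrow>
  partial (\<lambda>y. \<Sum>i\<in>I. f i y) x l = (\<Sum>i\<in>I. partial (f i) x l)"
  by (subst partial_at[OF has_derivative_sum[OF diff_hasD]]) (auto simp: partial_def)

lemma poisson_diff: "is_poisson U P \<Longrightarrow> x \<in> U \<Longrightarrow> (\<lambda>y. P y $ i $ j) differentiable (at x)"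
  unfolding is_poisson_def by (auto intro: smooth_diff)

lemma inv_props: assumes "invertible (M::real^'m^'m)"
  shows "M ** matrix_inv M = mat 1" "matrix_inv M ** M = mat 1"
proof -
  have "\<exists>M'. M ** M' = mat 1 \<and> M' ** M = mat 1" using assms unfolding invertible_def .
  hence "M ** matrix_inv M = mat 1 \<and> matrix_inv M ** M = mat 1"
    unfolding matrix_inv_def by (rule someI_ex)
  thus "M ** matrix_inv M = mat 1" "matrix_inv M ** M = mat 1" by auto
qed

lemma poisson_skew: "is_poisson U P \<Longrightarrow> y \<in> U \<Longrightarrow> transpose (P y) = - P y"
  unfolding is_poisson_def by blast

lemma poisson_J: "is_poisson U P \<Longrightarrow> x \<in> U \<Longrightarrow> (\<Sum>l\<in>UNIV. P x $ i $ l * partial (\<lambda>y. P y $ j $ k) x l + P x $ j $ l * partial (\<lambda>y. P y $ k $ i) x l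
       + P x $ k $ l * partial (\<lambda>y. P y $ i $ j) x l) = 0"
  unfolding is_poisson_def by blast

lemma pn_at:
  assumes U: "open U" and P0: "is_poisson U P0" and P1: "is_poisson U P1"
    and C: "compatible_poisson U P0 P1" and inv: "\<forall>x\<in>U. invertible (P0 x)" and x: "x \<in> U"
  shows "pn (P0 x) (P1 x) (matrix_inv (P0 x)) (\<lambda>l. \<chi> i j. partial (\<lambda>y. P0 y$i$j) x l)
           (\<lambda>l. \<chi> i j. partial (\<lambda>y. P1 y$i$j) x l)"
proof -
  have skew: "transpose (P x) = - P x" "P y $ i $ j = - P y $ j $ i" if "is_poisson U P" "y \<in> U" for P y i j
  proof -
    show "transpose (P x) = - P x" using that(1) x by (rule poisson_skew)
    have "transpose (P y) = - P y" using that by (rule poisson_skew)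
    thus "P y $ i $ j = - P y $ j $ i" by (rule skew_entry)
  qed
  have skd: "transpose (\<chi> i j. partial (\<lambda>y. P y$i$j) x l) = - (\<chi> i j. partial (\<lambda>y. P y$i$j) x l)"
    if "is_poisson U P" for P l
  proof -
    have e: "partial (\<lambda>y. P y$j$i) x l = - partial (\<lambda>y. P y$i$j) x l" for i j
    proof -
      have "partial (\<lambda>y. P y$j$i) x l = partial (\<lambda>y. - P y$i$j) x l"
        by (rule partial_cong_open[OF U x]) (rule skew(2)[OF that])
      also have "\<dots> = - partial (\<lambda>y. P y$i$j) x l"
        by (rule partial_neg[OF poisson_diff[OF that x]])
      finally show ?thesis .
    qed
    have "(transpose (\<chi> i j. partial (\<lambda>y. P y$i$j) x l))$i$j = (- (\<chi> i j. partial (\<lambda>y. P y$i$j) x l))$i$j" for i j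
      using e[of j i] by (simp add: transpose_def)
    thus ?thesis by (simp add: vec_eq_iff)
  qed
  have J: "(\<Sum>l\<in>UNIV. P x $ i $ l * partial (\<lambda>y. P y $ j $ k) x l + P x $ j $ l * partial (\<lambda>y. P y $ k $ i) x l
       + P x $ k $ l * partial (\<lambda>y. P y $ i $ j) x l) = 0" if "is_poisson U P" for P i j k
    using that x by (rule poisson_J)
  have Jt: "is_poisson U (\<lambda>x. P0 x + 1 *\<^sub>R P1 x)" using C unfolding compatible_poisson_def by blast
  have pd: "partial (\<lambda>y. P0 y $ i $ j + P1 y $ i $ j) x l = partial (\<lambda>y. P0 y$i$j) x l + partial (\<lambda>y. P1 y$i$j) x l" for i j l
    by (rule partial_add[OF poisson_diff[OF P0 x] poisson_diff[OF P1 x]])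
  show ?thesis
  proof (unfold_locales)
    let ?W = "matrix_inv (P0 x)"
    show "?W ** P0 x = mat 1" "P0 x ** ?W = mat 1" using inv_props inv x by auto
    show "transpose (P0 x) = - P0 x" by (rule skew(1)[OF P0 x])
    show "transpose (P1 x) = - P1 x" by (rule skew(1)[OF P1 x])
    show "\<And>l. transpose (\<chi> i j. partial (\<lambda>y. P0 y$i$j) x l) = - (\<chi> i j. partial (\<lambda>y. P0 y$i$j) x l)"
      by (rule skd[OF P0])
    show "\<And>l. transpose (\<chi> i j. partial (\<lambda>y. P1 y$i$j) x l) = - (\<chi> i j. partial (\<lambda>y. P1 y$i$j) x l)"
      by (rule skd[OF P1])
    show "\<And>i j k. (\<Sum>l\<in>UNIV. P0 x$i$l * (\<chi> i j. partial (\<lambda>y. P0 y$i$j) x l)$j$k + P0 x$j$l * (\<chi> i j. partial (\<lambda>y. P0 y$i$j) x l)$k$i + P0 x$k$l * (\<chi> i j. partial (\<lambda>y. P0 y$i$j) x l)$i$j) = 0"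
      using J[OF P0] by simp
    show "\<And>i j k. (\<Sum>l\<in>UNIV. P1 x$i$l * (\<chi> i j. partial (\<lambda>y. P1 y$i$j) x l)$j$k + P1 x$j$l * (\<chi> i j. partial (\<lambda>y. P1 y$i$j) x l)$k$i + P1 x$k$l * (\<chi> i j. partial (\<lambda>y. P1 y$i$j) x l)$i$j) = 0"
      using J[OF P1] by simp
    fix i j k
    let ?a = "\<lambda>i j l. partial (\<lambda>y. P0 y$i$j) x l" and ?b = "\<lambda>i j l. partial (\<lambda>y. P1 y$i$j) x l"
    have "0 = (\<Sum>l\<in>UNIV. (P0 x $i$l + P1 x$i$l) * (?a j k l + ?b j k l) + (P0 x $j$l + P1 x$j$l) * (?a k i l + ?b k i l)
              + (P0 x $k$l + P1 x$k$l) * (?a i j l + ?b i j l))"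
      using J[OF Jt, of i j k] by (simp add: pd)
    also have "\<dots> = (\<Sum>l\<in>UNIV. P0 x $ i $ l * ?a j k l + P0 x $ j $ l * ?a k i l + P0 x $ k $ l * ?a i j l)
       + (\<Sum>l\<in>UNIV. (P0 x$i$l * ?b j k l + P1 x$i$l * ?a j k l) + (P0 x$j$l * ?b k i l + P1 x$j$l * ?a k i l)
                     + (P0 x$k$l * ?b i j l + P1 x$k$l * ?a i j l))
       + (\<Sum>l\<in>UNIV. P1 x $ i $ l * ?b j k l + P1 x $ j $ l * ?b k i l + P1 x $ k $ l * ?b i j l)"
      unfolding sum.distrib[symmetric] by (rule sum.cong) (simp_all add: algebra_simps)
    finally show "(\<Sum>l\<in>UNIV. (P0 x$i$l * (\<chi> i j. ?b i j l)$j$k + P1 x$i$l * (\<chi> i j. ?a i j l)$j$k)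
        + (P0 x$j$l * (\<chi> i j. ?b i j l)$k$i + P1 x$j$l * (\<chi> i j. ?a i j l)$k$i)
        + (P0 x$k$l * (\<chi> i j. ?b i j l)$i$j + P1 x$k$l * (\<chi> i j. ?a i j l)$i$j)) = 0"
      using J[OF P0, of i j k] J[OF P1, of i j k] by simp
  qed
qed


lemma det_partial:
  fixes M :: "real^'m \<Rightarrow> real^'n^'n"
  assumes d: "\<And>i j. (\<lambda>y. M y$i$j) differentiable (at x)" and X: "X ** M x = mat 1"
  shows "partial (\<lambda>y. det (M y)) x l = det (M x) * trace ((\<chi> i j. partial (\<lambda>y. M y$i$j) x l) ** X)"
proof -
  let ?D = "\<chi> i j. partial (\<lambda>y. M y$i$j) x l"
  have "partial (\<lambda>y. det (M y)) x l = (\<Sum>i\<in>UNIV. det (\<chi> r. if r = i then (\<chi> c. frechet_derivative (\<lambda>y. M y$i$c) (at x) (axis l 1)) else M x $ r))"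
    by (rule partial_at[OF det_has_derivative[OF diff_hasD[OF d]]])
  also have "\<dots> = (\<Sum>i\<in>UNIV. det (\<chi> r. if r = i then ?D$i else M x $ r))"
  proof -
    have "(\<chi> r. if r = i then (\<chi> c. frechet_derivative (\<lambda>y. M y$i$c) (at x) (axis l 1)) else M x $ r)
       = (\<chi> r. if r = i then ?D$i else M x $ r)" for i
      by (simp add: partial_def vec_eq_iff)
    thus ?thesis by simp
  qed
  also have "\<dots> = det (M x) * trace (?D ** X)" by (rule jacobi[OF X])
  finally show ?thesis .
qed

lemma trace_scale: "trace (c *\<^sub>R (X::real^'n^'n)) = c * trace X"
  by (simp add: trace_def sum_distrib_left)
lemma mm_scale_l: "(c *\<^sub>R (X::real^'n^'n)) ** Y = c *\<^sub>R (X ** Y)"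
  by (simp add: matrix_matrix_mult_def vec_eq_iff sum_distrib_left mult.assoc)
lemma mm_scale_r: "(X::real^'n^'n) ** (c *\<^sub>R Y) = c *\<^sub>R (X ** Y)"
  by (simp add: matrix_matrix_mult_def vec_eq_iff sum_distrib_left mult_ac)
lemma mm_diff_r: "((X::real^'n^'n) - Y) ** Z = X ** Z - Y ** Z"
  by (simp add: matrix_matrix_mult_def vec_eq_iff sum_subtractf left_diff_distrib)
lemma mm_diff_l2: "(Z::real^'n^'n) ** (X - Y) = Z ** X - Z ** Y"
  by (simp add: matrix_matrix_mult_def vec_eq_iff sum_subtractf right_diff_distrib)
lemma mm_add_r: "((X::real^'n^'n) + Y) ** Z = X ** Z + Y ** Z"
  by (simp add: matrix_matrix_mult_def vec_eq_iff sum.distrib distrib_right)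
lemma mm_add_l: "(Z::real^'n^'n) ** (X + Y) = Z ** X + Z ** Y"
  by (simp add: matrix_matrix_mult_def vec_eq_iff sum.distrib distrib_left)
lemma trace_diff: "trace ((X::real^'n^'n) - Y) = trace X - trace Y"
  by (simp add: trace_def sum_subtractf)
lemma trace_add2: "trace ((X::real^'n^'n) + Y) = trace X + trace Y"
  by (simp add: trace_def sum.distrib)
lemma trace_neg: "trace (- (X::real^'n^'n)) = - trace X"
  by (simp add: trace_def sum_negf)
lemma mm_neg_r: "(X::real^'n^'n) ** (- Y) = - (X ** Y)"
  by (simp add: matrix_matrix_mult_def vec_eq_iff sum_negf)
lemma mm_neg_l: "(- X::real^'n^'n) ** Y = - (X ** Y)"
  by (simp add: matrix_matrix_mult_def vec_eq_iff sum_negf)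

lemma Rmul: "(c *\<^sub>R mat 1 - (X::real^'n^'n)) ** Y = c *\<^sub>R Y - X ** Y"
  by (simp add: mm_diff_r mm_scale_l)

definition "AdG P0 x l = (\<chi> i j. partial (\<lambda>y. P0 y$i$j) x l)"
definition "NdG P0 P1 x l = AdG P1 x l ** matrix_inv (P0 x) + P1 x ** (- (matrix_inv (P0 x) ** AdG P0 x l ** matrix_inv (P0 x)))"

lemma key:
  assumes U: "open U" and P0: "is_poisson U P0" and P1: "is_poisson U P1"
    and inv: "\<forall>x\<in>U. invertible (P0 x)" and x: "x \<in> U"
    and nz: "det (t *\<^sub>R mat 1 - recursion_op P0 P1 x) \<noteq> 0"
  shows "partial (\<lambda>y. det (t *\<^sub>R mat 1 - recursion_op P0 P1 y)) x l
    = - det (t *\<^sub>R mat 1 - recursion_op P0 P1 x) * trace (matrix_inv (t *\<^sub>R mat 1 - recursion_op P0 P1 x) ** NdG P0 P1 x l)"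
proof -
  let ?R = "\<lambda>y. t *\<^sub>R mat 1 - recursion_op P0 P1 y"
  let ?f = "\<lambda>y. det (t *\<^sub>R P0 y - P1 y)" and ?g = "\<lambda>y. det (P0 y)"
  define A where "A = P0 x"
  define B where "B = P1 x"
  define W where "W = matrix_inv A"
  define K where "K = matrix_inv (?R x)"
  define Ad where "Ad = AdG P0 x l"
  define Bd where "Bd = AdG P1 x l"
  have RA: "?R y ** P0 y = t *\<^sub>R P0 y - P1 y" if "y \<in> U" for y
    using inv_props(2)[of "P0 y"] inv that
    by (simp add: Rmul recursion_op_def matrix_mul_assoc[symmetric])
  have gnz: "?g y \<noteq> 0" if "y \<in> U" for y using inv that by (simp add: invertible_det_nz)
  have eq: "det (?R y) = ?f y / ?g y" if "y \<in> U" for y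
    using RA[OF that] gnz[OF that] by (metis det_mul nonzero_eq_divide_eq)
  have Kinv: "K ** ?R x = mat 1" "?R x ** K = mat 1"
    using inv_props[of "?R x"] nz unfolding K_def by (auto simp: invertible_det_nz)
  have WA: "W ** A = mat 1" "A ** W = mat 1" using inv_props[of A] inv x unfolding W_def A_def by auto
  have df: "\<And>i j. (\<lambda>y. (t *\<^sub>R P0 y - P1 y)$i$j) differentiable (at x)"
    using poisson_diff[OF P0 x] poisson_diff[OF P1 x] by simp
  have dg: "\<And>i j. (\<lambda>y. P0 y$i$j) differentiable (at x)" using poisson_diff[OF P0 x] .
  have Xf: "(W ** K) ** (t *\<^sub>R P0 x - P1 x) = mat 1"
  proof -
    have "(W ** K) ** (t *\<^sub>R P0 x - P1 x) = (W ** K) ** (?R x ** A)"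
      using RA[OF x] unfolding A_def by simp
    also have "\<dots> = W ** (K ** ?R x) ** A" by (simp add: matrix_mul_assoc)
    finally have "(W ** K) ** (t *\<^sub>R P0 x - P1 x) = W ** (K ** ?R x) ** A" .
    thus ?thesis using Kinv WA by simp
  qed
  have Df: "(\<chi> i j. partial (\<lambda>y. (t *\<^sub>R P0 y - P1 y)$i$j) x l) = t *\<^sub>R Ad - Bd"
  proof -
    have "partial (\<lambda>y. (t *\<^sub>R P0 y - P1 y)$i$j) x l = t * partial (\<lambda>y. P0 y$i$j) x l - partial (\<lambda>y. P1 y$i$j) x l" for i j
    proof -
      have "partial (\<lambda>y. (t *\<^sub>R P0 y - P1 y)$i$j) x l = partial (\<lambda>y. t * P0 y$i$j - P1 y$i$j) x l" by simp
      also have "\<dots> = partial (\<lambda>y. t * P0 y$i$j) x l - partial (\<lambda>y. P1 y$i$j) x l"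
        by (rule partial_diff) (use poisson_diff[OF P0 x] poisson_diff[OF P1 x] in auto)
      also have "\<dots> = t * partial (\<lambda>y. P0 y$i$j) x l - partial (\<lambda>y. P1 y$i$j) x l"
        using partial_cmult[OF poisson_diff[OF P0 x]] by simp
      finally show ?thesis .
    qed
    thus ?thesis unfolding Ad_def Bd_def AdG_def by (simp add: vec_eq_iff)
  qed
  have fd: "partial ?f x l = ?f x * trace ((t *\<^sub>R Ad - Bd) ** (W ** K))"
    using det_partial[OF df Xf, of l] Df by simp
  have gd: "partial ?g x l = ?g x * trace (Ad ** W)"
    using det_partial[OF dg WA(1)[unfolded A_def], of l] unfolding Ad_def AdG_def W_def A_def by simp
  have "partial (\<lambda>y. det (?R y)) x l = partial (\<lambda>y. ?f y / ?g y) x l"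
    by (rule partial_cong_open[OF U x]) (rule eq)
  also have "\<dots> = - ?f x * (inverse (?g x) * partial ?g x l * inverse (?g x)) + partial ?f x l / ?g x"
  proof -
    have fh: "(?f has_derivative frechet_derivative ?f (at x)) (at x)"
      by (rule diff_hasD) (rule differentiableI, rule det_has_derivative[OF diff_hasD[OF df]])
    have gh: "(?g has_derivative frechet_derivative ?g (at x)) (at x)"
      by (rule diff_hasD) (rule differentiableI, rule det_has_derivative[OF diff_hasD[OF dg]])
    show ?thesis using partial_at[OF has_derivative_divide[OF fh gh gnz[OF x]]] by (simp add: partial_def)
  qed
  also have "\<dots> = det (?R x) * (trace ((t *\<^sub>R Ad - Bd) ** (W ** K)) - trace (Ad ** W))"
    using gnz[OF x] unfolding fd gd eq[OF x] by (simp add: field_simps)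
  also have "trace ((t *\<^sub>R Ad - Bd) ** (W ** K)) - trace (Ad ** W) = - trace (K ** NdG P0 P1 x l)"
  proof -
    have N: "recursion_op P0 P1 x = B ** W" unfolding recursion_op_def B_def W_def A_def ..
    have h: "t *\<^sub>R K - K ** (B ** W) = mat 1"
      using Kinv(1) unfolding N by (simp add: mm_diff_l2 mm_scale_r)
    have KN: "K ** (B ** W) = t *\<^sub>R K - mat 1"
      by (subst h[symmetric]) simp
    have "NdG P0 P1 x l = Bd ** W - (B ** W) ** Ad ** W"
      unfolding NdG_def Bd_def Ad_def W_def A_def B_def by (simp add: mm_neg_r matrix_mul_assoc)
    hence "trace (K ** NdG P0 P1 x l) = trace (K ** Bd ** W) - trace ((K ** (B ** W)) ** (Ad ** W))"
      by (simp add: mm_diff_l2 trace_diff matrix_mul_assoc)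
    also have "\<dots> = trace (K ** Bd ** W) - t * trace (K ** (Ad ** W)) + trace (Ad ** W)"
      unfolding KN by (simp add: mm_diff_r mm_scale_l trace_diff trace_scale)
    finally have 1: "trace (K ** NdG P0 P1 x l) = trace (K ** Bd ** W) - t * trace (K ** (Ad ** W)) + trace (Ad ** W)" .
    have 2: "trace ((t *\<^sub>R Ad - Bd) ** (W ** K)) = t * trace (K ** (Ad ** W)) - trace (K ** Bd ** W)"
      by (simp add: mm_diff_r mm_scale_l trace_diff trace_scale matrix_mul_assoc trace_mul_sym[of _ K])
    show ?thesis unfolding 1 2 by simp
  qed
  finally show ?thesis unfolding K_def by simp
qed




lemma coeff_lin: "coeff ((p::real poly) * [:a, 1:]) k = a * coeff p k + (if k = 0 then 0 else coeff p (k - 1))"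
  by (cases k) (simp_all add: mult_pCons_right coeff_pCons)

lemma Q_Suc: "(\<Prod>i<Suc m. [:- lam i y, 1:]) = (\<Prod>i<m. [:- lam i y, 1:]) * [:- lam m y, 1:]"
  by (simp add: prod.lessThan_Suc)

lemma Q_coeff_top: "coeff (\<Prod>i<m. [:- (lam i y::real), 1:]) k = (if k = m then 1 else if k > m then 0 else coeff (\<Prod>i<m. [:- lam i y, 1:]) k)"
proof (induction m arbitrary: k)
  case 0
  then show ?case by (simp add: coeff_1)
next
  case (Suc m)
  show ?case
  proof (cases "k \<ge> Suc m")
    case True
    have a: "coeff (\<Prod>i<m. [:- lam i y, 1:]) k = 0" using Suc.IH[of k] True by auto
    have b: "coeff (\<Prod>i<m. [:- lam i y, 1:]) (k - 1) = (if k - 1 = m then 1 else 0)"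
      using Suc.IH[of "k - 1"] True by auto
    show ?thesis unfolding Q_Suc coeff_lin using True a b by auto
  qed simp
qed

lemma Q_coeff_n: "coeff (\<Prod>i<m. [:- (lam i y::real), 1:]) m = 1"
  using Q_coeff_top[where m=m and lam=lam and y=y and k=m] by simp

lemma Q_coeff_gt: "k > m \<Longrightarrow> coeff (\<Prod>i<m. [:- (lam i y::real), 1:]) k = 0"
  using Q_coeff_top[where m=m and lam=lam and y=y and k=k] by simp

lemma Q_coeff_diff:
  fixes lam :: "nat \<Rightarrow> real^'m \<Rightarrow> real" and m :: nat
  assumes "\<forall>i<m. (lam i) differentiable (at x)"
  shows "(\<lambda>y. coeff (\<Prod>i<m. [:- lam i y, 1:]) k) differentiable (at x)"
  using assms
proof (induction m arbitrary: k)
  case 0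
  then show ?case by (simp add: coeff_1)
next
  case (Suc m)
  have d: "lam m differentiable (at x)" using Suc.prems by auto
  have ih: "\<And>k. (\<lambda>y. coeff (\<Prod>i<m. [:- lam i y, 1:]) k) differentiable (at x)" using Suc by auto
  show ?case unfolding Q_Suc coeff_lin
    by (intro differentiable_add differentiable_mult differentiable_minus d ih) (cases "k = 0"; simp add: ih)
qed

lemma Q_poly: "poly (\<Prod>i<m. [:- (lam i y::real), 1:]) t = (\<Sum>i\<le>m. coeff (\<Prod>i<m. [:- lam i y, 1:]) i * t ^ i)"
proof -
  let ?Q = "\<Prod>i<m. [:- lam i y, 1:]"
  have deg: "degree ?Q \<le> m" by (rule degree_le) (auto simp: Q_coeff_gt)
  have "poly ?Q t = (\<Sum>i\<le>degree ?Q. coeff ?Q i * t ^ i)" by (rule poly_altdef)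
  also have "\<dots> = (\<Sum>i\<le>m. coeff ?Q i * t ^ i)"
    by (rule sum.mono_neutral_left) (use deg in \<open>auto simp: coeff_eq_0\<close>)
  finally show ?thesis .
qed

lemma Q_poly_prod: "poly (\<Prod>i<m. [:- (lam i y::real), 1:]) t = (\<Prod>i<m. t - lam i y)"
  by (simp add: poly_prod)




lemma shift_sum: "t *\<^sub>R (\<Sum>i\<le>n. t^i *\<^sub>R (G i::real^'m)) = (\<Sum>i\<le>n. t^i *\<^sub>R (if i = 0 then 0 else G (i-1))) + t^(Suc n) *\<^sub>R G n"
proof (induction n)
  case 0
  then show ?case by simp
next
  case (Suc n)
  have "t *\<^sub>R (\<Sum>i\<le>Suc n. t^i *\<^sub>R G i) = t *\<^sub>R (\<Sum>i\<le>n. t^i *\<^sub>R G i) + t^(Suc (Suc n)) *\<^sub>R G (Suc n)"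
    by (simp add: scaleR_add_right)
  also have "\<dots> = (\<Sum>i\<le>Suc n. t^i *\<^sub>R (if i = 0 then 0 else G (i-1))) + t^(Suc (Suc n)) *\<^sub>R G (Suc n)"
    unfolding Suc.IH by simp
  finally show ?case .
qed

lemma mv_sum: "(L::real^'m^'m) *v (\<Sum>i\<le>(n::nat). f i) = (\<Sum>i\<le>n. L *v f i)"
  by (induction n) (simp_all add: matrix_vector_right_distrib)

lemma coeffs_zero:
  fixes c :: "nat \<Rightarrow> real"
  assumes fin: "finite {t. \<not> P t}" and z: "\<And>t. P t \<Longrightarrow> (\<Sum>i\<le>n. c i * t^i) = 0" and i: "i \<le> n"
  shows "c i = 0"
proof -
  define q where "q = (\<Sum>i\<le>n. monom (c i) i)"
  have pq: "poly q t = (\<Sum>i\<le>n. c i * t^i)" for t unfolding q_def by (simp add: poly_sum poly_monom)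
  have "q = 0"
  proof (rule ccontr)
    assume "q \<noteq> 0"
    hence "finite {t. poly q t = 0}" by (rule poly_roots_finite)
    moreover have "{t. P t} \<subseteq> {t. poly q t = 0}" using z pq by auto
    ultimately have "finite {t. P t}" by (rule finite_subset[rotated])
    hence "finite ({t. P t} \<union> {t. \<not> P t})" using fin by simp
    moreover have "{t. P t} \<union> {t. \<not> P t} = (UNIV::real set)" by auto
    ultimately show False by (simp add: infinite_UNIV_char_0)
  qed
  hence "coeff q i = 0" by simp
  moreover have "coeff q i = c i" unfolding q_def coeff_sum using i by (simp add: sum.delta)
  ultimately show ?thesis by simp
qed

lemma poly_part:
  fixes L :: "real^'m^'m" and G :: "nat \<Rightarrow> real^'m" and a :: "nat \<Rightarrow> real"
  assumes Gn: "G n = 0" and an: "a n = 1"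
    and fin: "finite {t. (\<Sum>i\<le>n. a i * t^i) = 0}"
    and H: "\<And>t. (\<Sum>i\<le>n. a i * t^i) \<noteq> 0 \<Longrightarrow>
        L *v (\<Sum>i\<le>n. t^i *\<^sub>R G i) = t *\<^sub>R (\<Sum>i\<le>n. t^i *\<^sub>R G i) + (\<Sum>i\<le>n. a i * t^i) *\<^sub>R s"
  shows "\<And>i. i \<le> n \<Longrightarrow> L *v G i = (if i = 0 then 0 else G (i - 1)) + a i *\<^sub>R s"
    and "\<And>t. L *v (\<Sum>i\<le>n. t^i *\<^sub>R G i) = t *\<^sub>R (\<Sum>i\<le>n. t^i *\<^sub>R G i) + (\<Sum>i\<le>n. a i * t^i) *\<^sub>R s"
proof -
  define e where "e i = L *v G i - (if i = 0 then 0 else G (i - 1)) - a i *\<^sub>R s" for i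
  have E: "L *v (\<Sum>i\<le>n. t^i *\<^sub>R G i) - t *\<^sub>R (\<Sum>i\<le>n. t^i *\<^sub>R G i) - (\<Sum>i\<le>n. a i * t^i) *\<^sub>R s
      = (\<Sum>i\<le>n. t^i *\<^sub>R e i)" for t
    unfolding shift_sum Gn mv_sum e_def
    by (simp add: scaleR_diff_right sum_subtractf matrix_vector_mult_scaleR scaleR_sum_left mult.commute)
  have ez: "e i = 0" if "i \<le> n" for i
  proof -
    have "e i $ j = 0" for j
    proof (rule coeffs_zero[OF _ _ that, where P = "\<lambda>t. (\<Sum>i\<le>n. a i * t^i) \<noteq> 0"])
      show "finite {t. \<not> (\<Sum>i\<le>n. a i * t ^ i) \<noteq> 0}" using fin by simp
      fix t assume "(\<Sum>i\<le>n. a i * t ^ i) \<noteq> 0"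
      hence "(\<Sum>i\<le>n. t^i *\<^sub>R e i) = 0" using H[of t] E[of t, symmetric] by simp
      hence "(\<Sum>i\<le>n. t^i *\<^sub>R e i) $ j = 0" by simp
      thus "(\<Sum>i\<le>n. e i $ j * t ^ i) = 0" by (simp add: sum_component mult.commute)
    qed
    thus ?thesis by (simp add: vec_eq_iff)
  qed
  show "\<And>i. i \<le> n \<Longrightarrow> L *v G i = (if i = 0 then 0 else G (i - 1)) + a i *\<^sub>R s"
    using ez unfolding e_def by (simp add: algebra_simps)
  show "\<And>t. L *v (\<Sum>i\<le>n. t^i *\<^sub>R G i) = t *\<^sub>R (\<Sum>i\<le>n. t^i *\<^sub>R G i) + (\<Sum>i\<le>n. a i * t^i) *\<^sub>R s"
  proof -
    fix t
    have "(\<Sum>i\<le>n. t^i *\<^sub>R e i) = 0" using ez by simp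
    thus "L *v (\<Sum>i\<le>n. t^i *\<^sub>R G i) = t *\<^sub>R (\<Sum>i\<le>n. t^i *\<^sub>R G i) + (\<Sum>i\<le>n. a i * t^i) *\<^sub>R s"
      using E[of t] by (simp add: algebra_simps)
  qed
qed




lemma poly_Q_diff:
  fixes lam :: "nat \<Rightarrow> real^'m \<Rightarrow> real"
  assumes "\<forall>i<m. (lam i) differentiable (at x)"
  shows "(\<lambda>y. poly (\<Prod>i<m. [:- lam i y, 1:]) t) differentiable (at x)"
proof -
  have "(\<lambda>y. \<Sum>i\<le>m. coeff (\<Prod>i<m. [:- lam i y, 1:]) i * t ^ i) differentiable (at x)"
    by (intro differentiable_sum ballI differentiable_mult Q_coeff_diff assms differentiable_const) simp
  thus ?thesis unfolding Q_poly .
qed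

lemma dfun_poly_Q:
  fixes lam :: "nat \<Rightarrow> real^'m \<Rightarrow> real"
  assumes "\<forall>i<m. (lam i) differentiable (at x)"
  shows "dfun (\<lambda>y. poly (\<Prod>i<m. [:- lam i y, 1:]) t) x = (\<Sum>i\<le>m. t^i *\<^sub>R dfun (\<lambda>y. coeff (\<Prod>i<m. [:- lam i y, 1:]) i) x)"
proof -
  have e1: "partial (\<lambda>y. \<Sum>i\<le>m. coeff (\<Prod>i<m. [:- lam i y, 1:]) i * t ^ i) x l
      = (\<Sum>i\<le>m. partial (\<lambda>y. coeff (\<Prod>i<m. [:- lam i y, 1:]) i * t ^ i) x l)" for l
    by (rule partial_sum) (auto intro!: differentiable_mult Q_coeff_diff assms)
  have e2: "partial (\<lambda>y. coeff (\<Prod>i<m. [:- lam i y, 1:]) i * t ^ i) x l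
      = t^i * partial (\<lambda>y. coeff (\<Prod>i<m. [:- lam i y, 1:]) i) x l" for i l
  proof -
    have "(\<lambda>y. coeff (\<Prod>i<m. [:- lam i y, 1:]) i * t ^ i) = (\<lambda>y. t ^ i * coeff (\<Prod>i<m. [:- lam i y, 1:]) i)"
      by (simp add: mult.commute)
    thus ?thesis using partial_cmult[OF Q_coeff_diff[OF assms]] by simp
  qed
  show ?thesis unfolding Q_poly dfun_def by (simp add: vec_eq_iff sum_component e1 e2)
qed

lemma mv_neg: "(L::real^'m^'m) *v (- v) = - (L *v v)"
  by (simp add: matrix_vector_mult_def vec_eq_iff sum_negf)

theorem mainTheorem3:
  fixes U V :: "(real^'m) set"
    and P0 P1 :: "real^'m \<Rightarrow> real^'m^'m"
    and n :: nat
    and lam :: "nat \<Rightarrow> real^'m \<Rightarrow> real"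
  assumes dim: "CARD('m) = 2 * n"
    and U_open: "open U"
    and P0_poisson: "is_poisson U P0"
    and P1_poisson: "is_poisson U P1"
    and compat: "compatible_poisson U P0 P1"
    and P0_inv: "\<forall>x\<in>U. invertible (P0 x)"
    and V_open: "open V" and VU: "V \<subseteq> U"
    and lam_smooth: "\<forall>i<n. smooth_on V (lam i)"
    and lam_distinct: "\<forall>x\<in>V. \<forall>i<n. \<forall>j<n. i \<noteq> j \<longrightarrow> lam i x \<noteq> lam j x"
    and eig: "\<forall>x\<in>V. \<forall>t::real.
               det (t *\<^sub>R mat 1 - recursion_op P0 P1 x) = (\<Prod>i<n. (t - lam i x)) ^ 2"
  shows "(\<forall>\<mu>::real. \<forall>x\<in>V.
            recursion_adj P0 P1 x *v dfun (\<lambda>y. poly (min_poly n lam y) \<mu>) x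
            = \<mu> *\<^sub>R dfun (\<lambda>y. poly (min_poly n lam y) \<mu>) x
              + poly (min_poly n lam x) \<mu> *\<^sub>R dfun (cf n lam 1) x)
       \<and> (\<forall>i\<in>{1..n}. \<forall>x\<in>V.
            recursion_adj P0 P1 x *v dfun (cf n lam i) x
            = dfun (cf n lam (i + 1)) x + cf n lam i x *\<^sub>R dfun (cf n lam 1) x)"
proof -
  have n1: "n \<ge> 1"
  proof -
    have "CARD('m) > 0" by simp
    thus ?thesis using dim by simp
  qed
  let ?Q = "\<lambda>y. \<Prod>i<n. [:- lam i y, 1:]"
  have mp: "min_poly n lam y = ?Q y" for y unfolding min_poly_def ..
  have pointwise: "(\<forall>\<mu>::real. recursion_adj P0 P1 x *v dfun (\<lambda>y. poly (min_poly n lam y) \<mu>) x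
            = \<mu> *\<^sub>R dfun (\<lambda>y. poly (min_poly n lam y) \<mu>) x
              + poly (min_poly n lam x) \<mu> *\<^sub>R dfun (cf n lam 1) x)
       \<and> (\<forall>i\<in>{1..n}. recursion_adj P0 P1 x *v dfun (cf n lam i) x
            = dfun (cf n lam (i + 1)) x + cf n lam i x *\<^sub>R dfun (cf n lam 1) x)"
    if xV: "x \<in> V" for x
  proof -
    have xU: "x \<in> U" using xV VU by auto
    have ld: "\<forall>i<n. (lam i) differentiable (at x)" using lam_smooth xV smooth_diff by blast
    interpret pn "P0 x" "P1 x" "matrix_inv (P0 x)" "AdG P0 x" "AdG P1 x"
      using pn_at[OF U_open P0_poisson P1_poisson compat P0_inv xU] unfolding AdG_def[abs_def] .
    have Ndeq: "Nd l = NdG P0 P1 x l" for l unfolding Nd_def Wd_def NdG_def ..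
    have Neq: "N = recursion_op P0 P1 x" unfolding N_def recursion_op_def ..
    have Nteq: "Nt = recursion_adj P0 P1 x" unfolding Nt_def recursion_adj_def ..
    define a where "a i = coeff (?Q x) i" for i
    define G where "G i = dfun (\<lambda>y. coeff (?Q y) i) x" for i
    define s where "s = (\<chi> j. trace (Nd j) / 2)"
    have dq: "dfun (\<lambda>y. poly (?Q y) t) x = (\<Sum>i\<le>n. t^i *\<^sub>R G i)" for t
      unfolding G_def by (rule dfun_poly_Q[OF ld])
    have pa: "poly (?Q x) t = (\<Sum>i\<le>n. a i * t^i)" for t unfolding a_def by (rule Q_poly)
    have Gn: "G n = 0" unfolding G_def dfun_def Q_coeff_n by (simp add: partial_const vec_eq_iff)
    have an: "a n = 1" unfolding a_def by (rule Q_coeff_n)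
    have fin: "finite {t. (\<Sum>i\<le>n. a i * t^i) = 0}"
    proof -
      have "?Q x \<noteq> 0" using Q_coeff_n[where m=n and lam=lam and y=x] by auto
      hence "finite {t. poly (?Q x) t = 0}" by (rule poly_roots_finite)
      thus ?thesis unfolding pa .
    qed
    have H: "Nt *v (\<Sum>i\<le>n. t^i *\<^sub>R G i) = t *\<^sub>R (\<Sum>i\<le>n. t^i *\<^sub>R G i) + (\<Sum>i\<le>n. a i * t^i) *\<^sub>R s"
      if qnz: "(\<Sum>i\<le>n. a i * t^i) \<noteq> 0" for t
    proof -
      define q where "q = poly (?Q x) t"
      have qnz': "q \<noteq> 0" using qnz unfolding q_def pa .
      let ?p = "\<lambda>y. det (t *\<^sub>R mat 1 - recursion_op P0 P1 y)"
      have peq: "?p y = poly (?Q y) t * poly (?Q y) t" if "y \<in> V" for y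
        using eig that by (simp add: Q_poly_prod power2_eq_square)
      have px: "?p x = q * q" using peq[OF xV] unfolding q_def .
      have pnz: "?p x \<noteq> 0" using px qnz' by simp
      define K where "K = matrix_inv (t *\<^sub>R mat 1 - recursion_op P0 P1 x)"
      have fd: "(\<lambda>y. poly (?Q y) t) differentiable (at x)" by (rule poly_Q_diff[OF ld])
      have dp: "partial ?p x l = 2 * q * partial (\<lambda>y. poly (?Q y) t) x l" for l
      proof -
        have "partial ?p x l = partial (\<lambda>y. poly (?Q y) t * poly (?Q y) t) x l"
          by (rule partial_cong_open[OF V_open xV]) (rule peq)
        also have "\<dots> = 2 * q * partial (\<lambda>y. poly (?Q y) t) x l"
          unfolding partial_mult[OF fd fd] q_def by simp
        finally show ?thesis .
      qed
      have kp: "partial ?p x l = - ?p x * trace (K ** Nd l)" for l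
        unfolding K_def Ndeq by (rule key[OF U_open P0_poisson P1_poisson P0_inv xU pnz])
      have dql: "partial (\<lambda>y. poly (?Q y) t) x l = - (q / 2) * trace (K ** Nd l)" for l
      proof -
        have "2 * q * partial (\<lambda>y. poly (?Q y) t) x l = - (q * q) * trace (K ** Nd l)"
          using dp[of l] kp[of l] px by simp
        hence h: "q * (2 * partial (\<lambda>y. poly (?Q y) t) x l) = q * (- q * trace (K ** Nd l))"
          by (simp add: algebra_simps)
        have "2 * partial (\<lambda>y. poly (?Q y) t) x l = - q * trace (K ** Nd l)"
          using h unfolding mult_left_cancel[OF qnz'] .
        thus ?thesis by simp
      qed
      have Kinv: "K ** (t *\<^sub>R mat 1 - N) = mat 1" "(t *\<^sub>R mat 1 - N) ** K = mat 1"
        using inv_props[of "t *\<^sub>R mat 1 - N"] pnz unfolding K_def Neq by (auto simp: invertible_det_nz)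
      have KN1: "K ** N = t *\<^sub>R K - mat 1"
      proof -
        have h: "t *\<^sub>R K - K ** N = mat 1" using Kinv(1) by (simp add: mm_diff_l2 mm_scale_r)
        show ?thesis by (subst h[symmetric]) simp
      qed
      have KN2: "N ** K = t *\<^sub>R K - mat 1"
      proof -
        have h: "t *\<^sub>R K - N ** K = mat 1" using Kinv(2) by (simp add: mm_diff_r mm_scale_l)
        show ?thesis by (subst h[symmetric]) simp
      qed
      have con: "(\<Sum>l\<in>UNIV. N$l$j * trace (K ** Nd l)) = t * trace (K ** Nd j) - trace (Nd j)" for j
      proof -
        have "(\<Sum>l\<in>UNIV. N$l$j * trace (K ** Nd l)) = trace (K ** N ** Nd j)"
          by (rule contraction) (simp add: KN1 KN2)
        also have "\<dots> = t * trace (K ** Nd j) - trace (Nd j)"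
          unfolding KN1 by (simp add: mm_diff_r mm_scale_l trace_diff trace_scale)
        finally show ?thesis .
      qed
      have "(Nt *v dfun (\<lambda>y. poly (?Q y) t) x)$j = (t *\<^sub>R dfun (\<lambda>y. poly (?Q y) t) x + q *\<^sub>R s)$j" for j
      proof -
        have "(Nt *v dfun (\<lambda>y. poly (?Q y) t) x)$j = (\<Sum>l\<in>UNIV. N$l$j * (- (q / 2) * trace (K ** Nd l)))"
          by (simp add: matrix_vector_mult_def dfun_def dql Ntc)
        also have "\<dots> = - (q / 2) * (t * trace (K ** Nd j) - trace (Nd j))"
          unfolding con[symmetric] by (simp add: sum_distrib_left mult_ac)
        also have "\<dots> = (t *\<^sub>R dfun (\<lambda>y. poly (?Q y) t) x + q *\<^sub>R s)$j"
          by (simp add: dfun_def dql s_def algebra_simps)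
        finally show ?thesis .
      qed
      hence "Nt *v dfun (\<lambda>y. poly (?Q y) t) x = t *\<^sub>R dfun (\<lambda>y. poly (?Q y) t) x + q *\<^sub>R s"
        by (simp add: vec_eq_iff)
      thus ?thesis unfolding dq q_def pa .
    qed
    note PP = poly_part[of G n a Nt s, OF Gn an fin H]
    have cf_eq: "cf n lam k = (\<lambda>y. - coeff (?Q y) (n - k))" if "1 \<le> k" "k \<le> n" for k
      using that unfolding cf_def min_poly_def by auto
    have dcf: "dfun (cf n lam k) x = - G (n - k)" if "1 \<le> k" "k \<le> n" for k
      unfolding cf_eq[OF that] G_def dfun_def
      by (simp add: vec_eq_iff partial_neg[OF Q_coeff_diff[OF ld]])
    have s_eq: "s = dfun (cf n lam 1) x"
    proof -
      have "Nt *v G n = G (n - 1) + a n *\<^sub>R s" using PP(1)[of n] n1 by simp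
      hence "s + G (n - 1) = 0" using Gn an by (simp add: algebra_simps)
      hence "s = - G (n - 1)" by (simp add: eq_neg_iff_add_eq_0)
      thus ?thesis using dcf[of 1] n1 by simp
    qed
    show ?thesis
    proof (intro conjI allI ballI)
      fix \<mu> :: real
      show "recursion_adj P0 P1 x *v dfun (\<lambda>y. poly (min_poly n lam y) \<mu>) x
            = \<mu> *\<^sub>R dfun (\<lambda>y. poly (min_poly n lam y) \<mu>) x
              + poly (min_poly n lam x) \<mu> *\<^sub>R dfun (cf n lam 1) x"
        unfolding mp dq pa Nteq[symmetric] s_eq[symmetric] by (rule PP(2))
    next
      fix i assume i: "i \<in> {1..n}"
      let ?r = "n - i"
      have rel: "Nt *v G ?r = (if ?r = 0 then 0 else G (?r - 1)) + a ?r *\<^sub>R s" using PP(1)[of ?r] by simp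
      have cfi: "cf n lam i x = - a ?r" using i unfolding cf_def a_def min_poly_def by auto
      have dcf1: "dfun (cf n lam (i + 1)) x = - (if ?r = 0 then 0 else G (?r - 1))"
      proof (cases "i = n")
        case True
        have "cf n lam (i + 1) = (\<lambda>y. 0)" using True unfolding cf_def by auto
        thus ?thesis using True by (simp add: dfun_def partial_const vec_eq_iff)
      next
        case False
        hence "i + 1 \<le> n" using i by auto
        hence "dfun (cf n lam (i + 1)) x = - G (n - (i + 1))" using dcf[of "i+1"] by simp
        moreover have "n - (i + 1) = ?r - 1" by simp
        ultimately show ?thesis using False i by auto
      qed
      show "recursion_adj P0 P1 x *v dfun (cf n lam i) x
            = dfun (cf n lam (i + 1)) x + cf n lam i x *\<^sub>R dfun (cf n lam 1) x"
        using i rel dcf[of i]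
        unfolding Nteq[symmetric] dcf1 cfi s_eq[symmetric]
        by (auto simp: mv_neg algebra_simps)
    qed
  qed
  show ?thesis using pointwise by blast
qed


end
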